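(* Let $(a_i)_{i\ge0},(b_i)_{i\ge0},(c_i)_{i\ge0},(d_i)_{i\ge0}$ be integer sequences with all $b_i\neq0$, $d_i\ne 0$, and consider the bifurcating continued fraction with partial quotients $\alpha_i=a_i/b_i$ and $\beta_i=c_i/d_i$. Define rational numbers $A_n,B_n,C_n$ (together with $A_{n-1},A_{n-2}$, etc.) for $n\ge0$ by $$\begin{pmatrix}\alpha_0&1&0\\ \beta_0&0&1\\1&0&0\end{pmatrix}\cdots\begin{pmatrix}\alpha_n&1&0\\ \beta_n&0&1\\1&0&0\end{pmatrix}=\begin{pmatrix}A_n&A_{n-1}&A_{n-2}\\ B_n&B_{n-1}&B_{n-2}\\ C_n&C_{n-1}&C_{n-2}\end{pmatrix},$$ so that the $n$th convergent is $(A_n/C_n,B_n/C_n)$. Define $s_{-1}=1/d_0$, $s_0=a_0$, $s_1=a_0a_1d_1+b_0b_1c_1$ and, for $n\ge2$, $$s_n=a_nd_ns_{n-1}+b_nb_{n-1}c_nd_{n-1}s_{n-2}+b_nb_{n-1}b_{n-2}d_nd_{n-1}d_{n-2}s_{n-3},$$ and define $t_0=b_0$, $t_n=b_0\prod_{i=1}^n b_id_i$ for $n\ge1$. Then $A_n=s_n/t_n$ for every $n\ge0$.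
   Context: Equivalently, $A_{-2}=0$, $A_{-1}=1$, $A_0=\alpha_0$, and $A_n=\alpha_nA_{n-1}+\beta_nA_{n-2}+A_{n-3}$ for $n\ge1$ (with analogous recurrences for $B_n$, $C_n$). *)

theory Defs
  imports Complex_Main
begin

text \<open>3x3 matrices are represented as functions nat => nat => rat with indices 0,1,2.\<close>

definition mat3_mult :: "(nat \<Rightarrow> nat \<Rightarrow> rat) \<Rightarrow> (nat \<Rightarrow> nat \<Rightarrow> rat) \<Rightarrow> (nat \<Rightarrow> nat \<Rightarrow> rat)" where
  "mat3_mult M N = (\<lambda>i j. \<Sum>k<3. M i k * N k j)"

definition bcf_matrix :: "rat \<Rightarrow> rat \<Rightarrow> (nat \<Rightarrow> nat \<Rightarrow> rat)" where
  "bcf_matrix \<alpha> \<beta> = (\<lambda>i j.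
     if i = 0 then (if j = 0 then \<alpha> else if j = 1 then 1 else 0)
     else if i = 1 then (if j = 0 then \<beta> else if j = 1 then 0 else 1)
     else (if j = 0 then 1 else 0))"

fun bcf_prod :: "(nat \<Rightarrow> int) \<Rightarrow> (nat \<Rightarrow> int) \<Rightarrow> (nat \<Rightarrow> int) \<Rightarrow> (nat \<Rightarrow> int) \<Rightarrow> nat \<Rightarrow> (nat \<Rightarrow> nat \<Rightarrow> rat)" where
  "bcf_prod a b c d 0 = bcf_matrix (of_int (a 0) / of_int (b 0)) (of_int (c 0) / of_int (d 0))"
| "bcf_prod a b c d (Suc n) = mat3_mult (bcf_prod a b c d n)
     (bcf_matrix (of_int (a (Suc n)) / of_int (b (Suc n))) (of_int (c (Suc n)) / of_int (d (Suc n))))"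

definition bcf_A :: "(nat \<Rightarrow> int) \<Rightarrow> (nat \<Rightarrow> int) \<Rightarrow> (nat \<Rightarrow> int) \<Rightarrow> (nat \<Rightarrow> int) \<Rightarrow> nat \<Rightarrow> rat" where
  "bcf_A a b c d n = bcf_prod a b c d n 0 0"

text \<open>Shifted sequence: bcf_S k = s_(k-1), so bcf_S 0 = s_(-1) = 1/d_0.\<close>
fun bcf_S :: "(nat \<Rightarrow> int) \<Rightarrow> (nat \<Rightarrow> int) \<Rightarrow> (nat \<Rightarrow> int) \<Rightarrow> (nat \<Rightarrow> int) \<Rightarrow> nat \<Rightarrow> rat" where
  "bcf_S a b c d 0 = 1 / of_int (d 0)"
| "bcf_S a b c d (Suc 0) = of_int (a 0)"
| "bcf_S a b c d (Suc (Suc 0)) = of_int (a 0 * a 1 * d 1 + b 0 * b 1 * c 1)"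
| "bcf_S a b c d (Suc (Suc (Suc k))) =
     (let m = k + 2 in
        of_int (a m * d m) * bcf_S a b c d (Suc (Suc k))
      + of_int (b m * b (m - 1) * c m * d (m - 1)) * bcf_S a b c d (Suc k)
      + of_int (b m * b (m - 1) * b (m - 2) * d m * d (m - 1) * d (m - 2)) * bcf_S a b c d k)"

definition bcf_s :: "(nat \<Rightarrow> int) \<Rightarrow> (nat \<Rightarrow> int) \<Rightarrow> (nat \<Rightarrow> int) \<Rightarrow> (nat \<Rightarrow> int) \<Rightarrow> nat \<Rightarrow> rat" where
  "bcf_s a b c d n = bcf_S a b c d (Suc n)"

definition bcf_t :: "(nat \<Rightarrow> int) \<Rightarrow> (nat \<Rightarrow> int) \<Rightarrow> nat \<Rightarrow> int" where
  "bcf_t b d n = b 0 * (\<Prod>i = 1..n. b i * d i)"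

end

theory Submission
  imports Defs
begin

lemma prodS: "bcf_prod a b c d (Suc n) i j = mat3_mult (bcf_prod a b c d n)
     (bcf_matrix (of_int (a (Suc n)) / of_int (b (Suc n))) (of_int (c (Suc n)) / of_int (d (Suc n)))) i j"
  by simp

lemma col1: "bcf_prod a b c d (Suc n) 0 1 = bcf_prod a b c d n 0 0"
  by (simp add: mat3_mult_def bcf_matrix_def numeral_3_eq_3 lessThan_Suc numeral_2_eq_2 algebra_simps)
lemma col2: "bcf_prod a b c d (Suc n) 0 2 = bcf_prod a b c d n 0 1"
  by (simp add: mat3_mult_def bcf_matrix_def numeral_3_eq_3 lessThan_Suc numeral_2_eq_2 algebra_simps)
lemma col0: "bcf_prod a b c d (Suc n) 0 0 = of_int (a (Suc n)) / of_int (b (Suc n)) * bcf_prod a b c d n 0 0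
   + of_int (c (Suc n)) / of_int (d (Suc n)) * bcf_prod a b c d n 0 1 + bcf_prod a b c d n 0 2"
  by (simp add: mat3_mult_def bcf_matrix_def numeral_3_eq_3 lessThan_Suc numeral_2_eq_2 algebra_simps)

lemma A3: "bcf_A a b c d (Suc (Suc (Suc n))) =
   of_int (a (n+3)) / of_int (b (n+3)) * bcf_A a b c d (n+2)
   + of_int (c (n+3)) / of_int (d (n+3)) * bcf_A a b c d (n+1) + bcf_A a b c d n"
  unfolding bcf_A_def using col0[of a b c d "Suc (Suc n)"] col1 col2
  by (simp del: bcf_prod.simps add: numeral_3_eq_3 eval_nat_numeral)

lemma P0: "bcf_prod a b c d 0 0 0 = of_int (a 0) / of_int (b 0)" "bcf_prod a b c d 0 0 1 = 1"
  "bcf_prod a b c d 0 0 2 = 0" "bcf_prod a b c d 0 0 (Suc 0) = 1"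
  by (simp_all add: bcf_matrix_def)

lemma A0: "bcf_A a b c d 0 = of_int (a 0) / of_int (b 0)"
  by (simp add: bcf_A_def bcf_matrix_def)
lemma A1: "bcf_A a b c d 1 = of_int (a 1) / of_int (b 1) * (of_int (a 0) / of_int (b 0))
   + of_int (c 1) / of_int (d 1)"
  unfolding bcf_A_def using col0[of a b c d 0]
  by (simp del: bcf_prod.simps add: P0)
lemma A2: "bcf_A a b c d 2 = of_int (a 2) / of_int (b 2) * bcf_A a b c d 1
   + of_int (c 2) / of_int (d 2) * bcf_A a b c d 0 + 1"
  unfolding bcf_A_def using col0[of a b c d 1] col1[of a b c d 0] col2[of a b c d 0]
  by (simp del: bcf_prod.simps add: P0 numeral_2_eq_2)

lemma tS: "bcf_t b d (Suc n) = bcf_t b d n * (b (Suc n) * d (Suc n))"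
  unfolding bcf_t_def by (simp add: prod.nat_ivl_Suc' mult_ac)

theorem mainTheorem2:
  fixes a b c d :: "nat \<Rightarrow> int" and n :: nat
  assumes "\<And>i. b i \<noteq> 0" and "\<And>i. d i \<noteq> 0"
  shows "bcf_A a b c d n = bcf_s a b c d n / of_int (bcf_t b d n)"
proof (induction n rule: nat_less_induct)
  case (1 n)
  have bn: "\<And>i. (of_int (b i) :: rat) \<noteq> 0" "\<And>i. (of_int (d i) :: rat) \<noteq> 0" using assms by auto
  have t0: "bcf_t b d 0 = b 0" by (simp add: bcf_t_def)
  show ?case
  proof (cases n)
    case 0 then show ?thesis by (simp add: A0 bcf_s_def t0)
  next
    case (Suc m) note m = this
    show ?thesis
    proof (cases m)
      case 0
      then show ?thesis using m bn
        using A1[of a b c d] by (simp add: bcf_s_def tS t0 field_simps)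
    next
      case (Suc k) note k = this
      show ?thesis
      proof (cases k)
        case 0
        have e: "bcf_A a b c d 1 = bcf_s a b c d 1 / of_int (bcf_t b d 1)"
             "bcf_A a b c d 0 = bcf_s a b c d 0 / of_int (bcf_t b d 0)"
          using 1 m k 0 by auto
        show ?thesis using m k 0 bn
          apply (simp only: numeral_2_eq_2[symmetric] A2 e)
          apply (simp add: bcf_s_def tS t0 numeral_2_eq_2 field_simps)
          done
      next
        case (Suc j)
        have e: "bcf_A a b c d (j+2) = bcf_s a b c d (j+2) / of_int (bcf_t b d (j+2))"
             "bcf_A a b c d (j+1) = bcf_s a b c d (j+1) / of_int (bcf_t b d (j+1))"
             "bcf_A a b c d j = bcf_s a b c d j / of_int (bcf_t b d j)"
          using 1 m k Suc by auto
        have tnz: "(of_int (bcf_t b d j) :: rat) \<noteq> 0"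
          using assms by (simp add: bcf_t_def)
        have n3: "n = Suc (Suc (Suc j))" using m k Suc by simp
        show ?thesis unfolding n3 A3 e
          using bn tnz
          by (simp add: bcf_s_def tS eval_nat_numeral Let_def field_simps)
      qed
    qed
  qed
qed

end
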